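(* For every binary decision tree $T$ on $\mathcal X$ in which every node $n$ satisfies $\mathcal I(n)\neq\emptyset$, the cost of the corresponding solution graph $\mathcal S(T)$ satisfies $\mathrm{cost}(\mathcal S(T))=-\log P(T,\mathcal Y\mid\mathcal X)$. Consequently, a minimum-cost solution graph of $\mathcal G_{\mathcal X,\mathcal Y}$ corresponds to a maximum a posteriori tree, i.e. a tree maximizing $P(T\mid\mathcal Y,\mathcal X)\propto P(\mathcal Y\mid\mathcal X,T)P(T\mid\mathcal X)$.
   Context: Let $x_1,\dots,x_N\in\{0,1\}^F$ be a binary dataset $\mathcal X$ with labels $\mathcal Y=(y_1,\dots,y_N)\in\{0,1\}^N$, and $[N]=\{1,\dots,N\}$. For $\mathcal I\subseteq[N]$, $f\in[F]$, $k\in\{0,1\}$ let $\mathcal I|_{f=k}=\{i\in\mathcal I:(x_i)_f=k\}$, $c^k(\mathcal I)=|\{i\in\mathcal I:y_i=k\}|$, and $\mathcal V(\mathcal I)=\{f\in[F]:\mathcal I|_{f=0}\neq\emptyset\text{ and }\mathcal I|_{f=1}\neq\emptyset\}$. Fix $\rho^1,\rho^0>0$, $\alpha\in(0,1)$, $\beta\ge 0$. Let $B$ be the Beta function, $\ell_{\rm leaf}(c^1,c^0)=B(c^1+\rho^1,c^0+\rho^0)/B(\rho^1,\rho^0)$, $p_{\rm split}(d)=\alpha(1+d)^{-\beta}$, $p_{\rm leaf}(d,\mathcal I)=1$ if $\mathcal V(\mathcal I)=\emptyset$ and $1-p_{\rm split}(d)$ otherwise, $p_{\rm inner}(d,\mathcal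 I)=0$ if $\mathcal V(\mathcal I)=\emptyset$ and $p_{\rm split}(d)/|\mathcal V(\mathcal I)|$ otherwise; $-\log 0=+\infty$. The AND/OR graph $\mathcal G_{\mathcal X,\mathcal Y}$: for every nonempty $\mathcal I\subseteq[N]$ and $d\in\{0,\dots,F\}$ there is an OR node $o_{\mathcal I,d}$ and a terminal node $t_{\mathcal I,d}$, with an edge $o_{\mathcal I,d}\to t_{\mathcal I,d}$ of cost $-\log p_{\rm leaf}(d,\mathcal I)-\log\ell_{\rm leaf}(c^1(\mathcal I),c^0(\mathcal I))$. For every such OR node with $d<F$ and every $f\in\mathcal V(\mathcal I)$ there is an AND node $a_{\mathcal I,d,f}$ with an edge $o_{\mathcal I,d}\to a_{\mathcal I,d,f}$ of cost $-\log p_{\rm inner}(d,\mathcal I)$ and edges of cost $0$ from $a_{\mathcal I,d,f}$ to $o_{\mathcal I|_{f=0},d+1}$ and to $o_{\mathcal I|_{f=1},d+1}$. The root is $r=o_{[N],0}$; only nodes reachable from $r$ are kept. A solution graph is a set $\mathcal S$ of nodes with $r\in\mathcal S$, every node of $\mathcal S$ reachable from $r$ inside $\mathcal S$, every AND node of $\mathcal S$ having both children in $\mathcal S$, every OR node of $\mathcal S$ having exactly one child in $\mathcal S$; its cost $\mathrm{cost}(\mathcal S)$ is the sum of the costs of the edges $u\to v$ with $u,v\in\mathcal S$. A binary decision tree $T$ on $\mathcal X$ is a finite rooted tree in which each internal node $m$ is labeled by a feature $f(m)\in[F]$ and has a $0$-child and a $1$-child; $d(n)$ is the depth of node $n$ (root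 depth $0$), $\mathcal I(\mathrm{root})=[N]$ and the $k$-child of $m$ has $\mathcal I(m)|_{f(m)=k}$. The corresponding solution graph is $\mathcal S(T)=\{o_{\mathcal I(n),d(n)}:n\in T\}\cup\{t_{\mathcal I(n),d(n)}:n\text{ leaf}\}\cup\{a_{\mathcal I(m),d(m),f(m)}:m\text{ internal}\}$ (a bijection onto solution graphs). Prior and likelihood: $P(T\mid\mathcal X)=\prod_{l\text{ leaf}}p_{\rm leaf}(d(l),\mathcal I(l))\prod_{m\text{ internal}}p_{\rm inner}(d(m),\mathcal I(m))$, $P(\mathcal Y\mid\mathcal X,T)=\prod_{l\text{ leaf}}\ell_{\rm leaf}(c^1(\mathcal I(l)),c^0(\mathcal I(l)))$ (the marginal likelihood when each leaf has a Bernoulli label distribution with a $\mathrm{Beta}(\rho^1,\rho^0)$ prior on its parameter), and $P(T,\mathcal Y\mid\mathcal X)=P(\mathcal Y\mid\mathcal X,T)P(T\mid\mathcal X)$. *)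

theory Defs
  imports "HOL-Analysis.Analysis" "HOL-Library.Extended_Real"
begin

(* Dataset: x i f = (x_i)_f for i in {1..N}, f in {1..F}; y i = (y_i = 1).
   Booleans encode {0,1}: False = 0, True = 1. *)

definition restrict_f :: "(nat \<Rightarrow> nat \<Rightarrow> bool) \<Rightarrow> nat set \<Rightarrow> nat \<Rightarrow> bool \<Rightarrow> nat set" where
  "restrict_f x I f k = {i \<in> I. x i f = k}"

definition cnt :: "(nat \<Rightarrow> bool) \<Rightarrow> nat set \<Rightarrow> bool \<Rightarrow> nat" where
  "cnt y I k = card {i \<in> I. y i = k}"

definition splitvars :: "nat \<Rightarrow> (nat \<Rightarrow> nat \<Rightarrow> bool) \<Rightarrow> nat set \<Rightarrow> nat set" where
  "splitvars F x I = {f \<in> {1..F}. restrict_f x I f False \<noteq> {} \<and> restrict_f x I f True \<noteq> {}}"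

definition ell_leaf :: "real \<Rightarrow> real \<Rightarrow> nat \<Rightarrow> nat \<Rightarrow> real" where
  "ell_leaf rho1 rho0 c1 c0 = Beta (real c1 + rho1) (real c0 + rho0) / Beta rho1 rho0"

definition p_split :: "real \<Rightarrow> real \<Rightarrow> nat \<Rightarrow> real" where
  "p_split \<alpha> \<beta> d = \<alpha> * (1 + real d) powr (- \<beta>)"

definition p_leaf :: "nat \<Rightarrow> (nat \<Rightarrow> nat \<Rightarrow> bool) \<Rightarrow> real \<Rightarrow> real \<Rightarrow> nat \<Rightarrow> nat set \<Rightarrow> real" where
  "p_leaf F x \<alpha> \<beta> d I = (if splitvars F x I = {} then 1 else 1 - p_split \<alpha> \<beta> d)"

definition p_inner :: "nat \<Rightarrow> (nat \<Rightarrow> nat \<Rightarrow> bool) \<Rightarrow> real \<Rightarrow> real \<Rightarrow> nat \<Rightarrow> nat set \<Rightarrow> real" where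
  "p_inner F x \<alpha> \<beta> d I = (if splitvars F x I = {} then 0
     else p_split \<alpha> \<beta> d / real (card (splitvars F x I)))"

definition neglog :: "real \<Rightarrow> ereal" where
  "neglog p = (if p = 0 then \<infinity> else ereal (- ln p))"

datatype aonode = OrN "nat set" nat | TermN "nat set" nat | AndN "nat set" nat nat

(* Edges of the (unpruned) AND/OR graph G_{X,Y} *)
fun ao_edge :: "nat \<Rightarrow> nat \<Rightarrow> (nat \<Rightarrow> nat \<Rightarrow> bool) \<Rightarrow> aonode \<Rightarrow> aonode \<Rightarrow> bool" where
  "ao_edge N F x (OrN I d) (TermN J e) =
     (J = I \<and> e = d \<and> I \<noteq> {} \<and> I \<subseteq> {1..N} \<and> d \<le> F)"
| "ao_edge N F x (OrN I d) (AndN J e f) =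
     (J = I \<and> e = d \<and> I \<noteq> {} \<and> I \<subseteq> {1..N} \<and> d < F \<and> f \<in> splitvars F x I)"
| "ao_edge N F x (AndN I d f) (OrN J e) =
     (I \<noteq> {} \<and> I \<subseteq> {1..N} \<and> d < F \<and> f \<in> splitvars F x I \<and> e = d + 1 \<and>
      (J = restrict_f x I f False \<or> J = restrict_f x I f True))"
| "ao_edge N F x u v = False"

fun ao_cost :: "nat \<Rightarrow> (nat \<Rightarrow> nat \<Rightarrow> bool) \<Rightarrow> (nat \<Rightarrow> bool) \<Rightarrow> real \<Rightarrow> real \<Rightarrow> real \<Rightarrow> real
                 \<Rightarrow> aonode \<Rightarrow> aonode \<Rightarrow> ereal" where
  "ao_cost F x y rho1 rho0 \<alpha> \<beta> (OrN I d) (TermN J e) =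
     neglog (p_leaf F x \<alpha> \<beta> d I) + neglog (ell_leaf rho1 rho0 (cnt y I True) (cnt y I False))"
| "ao_cost F x y rho1 rho0 \<alpha> \<beta> (OrN I d) (AndN J e f) = neglog (p_inner F x \<alpha> \<beta> d I)"
| "ao_cost F x y rho1 rho0 \<alpha> \<beta> u v = 0"

definition ao_root :: "nat \<Rightarrow> aonode" where
  "ao_root N = OrN {1..N} 0"

definition G_edge :: "nat \<Rightarrow> nat \<Rightarrow> (nat \<Rightarrow> nat \<Rightarrow> bool) \<Rightarrow> aonode \<Rightarrow> aonode \<Rightarrow> bool" where
  "G_edge N F x u v = (ao_edge N F x u v \<and>
      (ao_root N, u) \<in> {(a, b). ao_edge N F x a b}\<^sup>*)"

definition sg_cost :: "nat \<Rightarrow> nat \<Rightarrow> (nat \<Rightarrow> nat \<Rightarrow> bool) \<Rightarrow> (nat \<Rightarrow> bool) \<Rightarrow> real \<Rightarrow> real \<Rightarrow> real \<Rightarrow> real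
                      \<Rightarrow> aonode set \<Rightarrow> ereal" where
  "sg_cost N F x y rho1 rho0 \<alpha> \<beta> S =
     (\<Sum>(u, v) \<in> {(u, v). u \<in> S \<and> v \<in> S \<and> G_edge N F x u v}. ao_cost F x y rho1 rho0 \<alpha> \<beta> u v)"

(* Binary decision trees: Node f t0 t1 splits on feature f, t0 is the 0-child, t1 the 1-child *)
datatype dtree = Leaf | Node nat dtree dtree

(* tree is a binary decision tree on X (features in [F]) whose nodes all have nonempty I(n);
   I is the index set of the current node *)
fun valid_tree :: "nat \<Rightarrow> (nat \<Rightarrow> nat \<Rightarrow> bool) \<Rightarrow> nat set \<Rightarrow> dtree \<Rightarrow> bool" where
  "valid_tree F x I Leaf = (I \<noteq> {})"
| "valid_tree F x I (Node f t0 t1) = (I \<noteq> {} \<and> f \<in> {1..F} \<and>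
      valid_tree F x (restrict_f x I f False) t0 \<and> valid_tree F x (restrict_f x I f True) t1)"

(* S(T) for the subtree rooted at a node with index set I and depth d *)
fun sgraph :: "(nat \<Rightarrow> nat \<Rightarrow> bool) \<Rightarrow> nat set \<Rightarrow> nat \<Rightarrow> dtree \<Rightarrow> aonode set" where
  "sgraph x I d Leaf = {OrN I d, TermN I d}"
| "sgraph x I d (Node f t0 t1) = {OrN I d, AndN I d f} \<union>
      sgraph x (restrict_f x I f False) (d + 1) t0 \<union> sgraph x (restrict_f x I f True) (d + 1) t1"

(* prior P(T | X) factor of a subtree *)
fun tree_prior :: "nat \<Rightarrow> (nat \<Rightarrow> nat \<Rightarrow> bool) \<Rightarrow> real \<Rightarrow> real \<Rightarrow> nat set \<Rightarrow> nat \<Rightarrow> dtree \<Rightarrow> real" where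
  "tree_prior F x \<alpha> \<beta> I d Leaf = p_leaf F x \<alpha> \<beta> d I"
| "tree_prior F x \<alpha> \<beta> I d (Node f t0 t1) = p_inner F x \<alpha> \<beta> d I *
      tree_prior F x \<alpha> \<beta> (restrict_f x I f False) (d + 1) t0 *
      tree_prior F x \<alpha> \<beta> (restrict_f x I f True) (d + 1) t1"

(* likelihood P(Y | X, T) factor of a subtree *)
fun tree_lik :: "(nat \<Rightarrow> nat \<Rightarrow> bool) \<Rightarrow> (nat \<Rightarrow> bool) \<Rightarrow> real \<Rightarrow> real \<Rightarrow> nat set \<Rightarrow> dtree \<Rightarrow> real" where
  "tree_lik x y rho1 rho0 I Leaf = ell_leaf rho1 rho0 (cnt y I True) (cnt y I False)"
| "tree_lik x y rho1 rho0 I (Node f t0 t1) =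
      tree_lik x y rho1 rho0 (restrict_f x I f False) t0 * tree_lik x y rho1 rho0 (restrict_f x I f True) t1"

definition joint_prob :: "nat \<Rightarrow> nat \<Rightarrow> (nat \<Rightarrow> nat \<Rightarrow> bool) \<Rightarrow> (nat \<Rightarrow> bool) \<Rightarrow> real \<Rightarrow> real \<Rightarrow> real \<Rightarrow> real
                          \<Rightarrow> dtree \<Rightarrow> real" where
  "joint_prob N F x y rho1 rho0 \<alpha> \<beta> T =
     tree_lik x y rho1 rho0 {1..N} T * tree_prior F x \<alpha> \<beta> {1..N} 0 T"

end

theory Submission
  imports Defs
begin

fun nset :: "aonode \<Rightarrow> nat set" where
  "nset (OrN I d) = I" | "nset (TermN I d) = I" | "nset (AndN I d f) = I"

fun ndep :: "aonode \<Rightarrow> nat" where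
  "ndep (OrN I d) = d" | "ndep (TermN I d) = d" | "ndep (AndN I d f) = d"

fun tedges :: "(nat \<Rightarrow> nat \<Rightarrow> bool) \<Rightarrow> nat set \<Rightarrow> nat \<Rightarrow> dtree \<Rightarrow> (aonode \<times> aonode) set" where
  "tedges x I d Leaf = {(OrN I d, TermN I d)}"
| "tedges x I d (Node f t0 t1) = {(OrN I d, AndN I d f), (AndN I d f, OrN (restrict_f x I f False) (d+1)),
      (AndN I d f, OrN (restrict_f x I f True) (d+1))} \<union>
      tedges x (restrict_f x I f False) (d + 1) t0 \<union> tedges x (restrict_f x I f True) (d + 1) t1"

lemma restrict_sub: "restrict_f x I f k \<subseteq> I"
  by (auto simp: restrict_f_def)

lemma restrict_disj: "restrict_f x I f False \<inter> restrict_f x I f True = {}"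
  by (auto simp: restrict_f_def)

lemma S1: "valid_tree F x I T \<Longrightarrow> v \<in> sgraph x I d T \<Longrightarrow> nset v \<subseteq> I \<and> nset v \<noteq> {} \<and> d \<le> ndep v"
proof (induction T arbitrary: I d)
  case Leaf
  then show ?case by auto
next
  case (Node f t0 t1)
  show ?case
  proof (cases "v \<in> {OrN I d, AndN I d f}")
    case True
    then show ?thesis using Node.prems by auto
  next
    case False
    then have "v \<in> sgraph x (restrict_f x I f False) (d + 1) t0 \<or> v \<in> sgraph x (restrict_f x I f True) (d + 1) t1"
      using Node.prems by auto
    then show ?thesis using Node.IH[of _ "d+1"] Node.prems restrict_sub[of x I f]
      by (auto; fastforce)
  qed
qed

lemma S2: "valid_tree F x I (Node f t0 t1) \<Longrightarrow> v \<in> sgraph x I d (Node f t0 t1) \<Longrightarrow> ndep v = d \<Longrightarrow>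
   v = OrN I d \<or> v = AndN I d f"
  using S1[of F x "restrict_f x I f False" t0 v "d+1"] S1[of F x "restrict_f x I f True" t1 v "d+1"]
  by auto

lemma S2L: "v \<in> sgraph x I d Leaf \<Longrightarrow> v = OrN I d \<or> v = TermN I d"
  by auto

lemma edgeE: "ao_edge N F x u v \<Longrightarrow> nset v \<subseteq> nset u \<and> ndep u \<le> ndep v \<and> ndep v \<le> ndep u + 1"
  by (cases u; cases v) (auto simp: restrict_f_def)

lemma root_in: "OrN I d \<in> sgraph x I d T"
  by (cases T) auto

lemma tedges_sub: "(u, v) \<in> tedges x I d T \<Longrightarrow> u \<in> sgraph x I d T \<and> v \<in> sgraph x I d T"
proof (induction T arbitrary: I d)
  case Leaf
  then show ?case by auto
next
  case (Node f t0 t1)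
  then show ?case
    using Node.IH(1)[of "restrict_f x I f False" "d+1"] Node.IH(2)[of "restrict_f x I f True" "d+1"]
    by (auto simp: root_in)
qed

lemma valid_ne: "valid_tree F x I T \<Longrightarrow> I \<noteq> {}"
  by (cases T) auto

lemma finite_tedges: "finite (tedges x I d T)"
  by (induction T arbitrary: I d) auto

lemma splitvars_child:
  assumes "f \<in> splitvars F x I"
  shows "card (splitvars F x (restrict_f x I f k)) + 1 \<le> card (splitvars F x I)"
proof -
  have "splitvars F x (restrict_f x I f k) \<subseteq> splitvars F x I - {f}"
    unfolding splitvars_def restrict_f_def by auto
  moreover have "finite (splitvars F x I)" unfolding splitvars_def by auto
  ultimately have "card (splitvars F x (restrict_f x I f k)) \<le> card (splitvars F x I - {f})"
    by (meson card_mono finite_Diff)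
  moreover have "card (splitvars F x I - {f}) + 1 = card (splitvars F x I)"
  proof -
    have "card (splitvars F x I) > 0" using assms \<open>finite (splitvars F x I)\<close> card_gt_0_iff by blast
    then show ?thesis using card_Diff_singleton[OF assms] by simp
  qed
  ultimately show ?thesis by linarith
qed

lemma valid_split: "valid_tree F x I (Node f t0 t1) \<Longrightarrow> f \<in> splitvars F x I"
proof -
  assume a: "valid_tree F x I (Node f t0 t1)"
  then have "restrict_f x I f False \<noteq> {}" "restrict_f x I f True \<noteq> {}"
    using valid_ne[of F x _ t0] valid_ne[of F x _ t1] by auto
  then show ?thesis using a unfolding splitvars_def by auto
qed

lemma edges_eq:
  assumes "valid_tree F x I T" "I \<subseteq> {1..N}" "card (splitvars F x I) + d \<le> F"
    "(ao_root N, OrN I d) \<in> {(a, b). ao_edge N F x a b}\<^sup>*"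
  shows "{(u, v). u \<in> sgraph x I d T \<and> v \<in> sgraph x I d T \<and> G_edge N F x u v} = tedges x I d T"
  using assms
proof (induction T arbitrary: I d)
  case Leaf
  show ?case
  proof
    show "{(u, v). u \<in> sgraph x I d Leaf \<and> v \<in> sgraph x I d Leaf \<and> G_edge N F x u v} \<subseteq> tedges x I d Leaf"
      by (auto simp: G_edge_def)
    show "tedges x I d Leaf \<subseteq> {(u, v). u \<in> sgraph x I d Leaf \<and> v \<in> sgraph x I d Leaf \<and> G_edge N F x u v}"
      using Leaf.prems by (auto simp: G_edge_def)
  qed
next
  case (Node f t0 t1)
  define I0 where "I0 = restrict_f x I f False"
  define I1 where "I1 = restrict_f x I f True"
  have fs: "f \<in> splitvars F x I" using valid_split Node.prems(1) by blast
  have v0: "valid_tree F x I0 t0" and v1: "valid_tree F x I1 t1" and Ine: "I \<noteq> {}"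
    using Node.prems(1) by (auto simp: I0_def I1_def)
  have sub0: "I0 \<subseteq> {1..N}" "I1 \<subseteq> {1..N}" using Node.prems(2) restrict_sub[of x I f] I0_def I1_def by auto
  have c0: "card (splitvars F x I0) + (d+1) \<le> F" "card (splitvars F x I1) + (d+1) \<le> F"
    using splitvars_child[OF fs, of False] splitvars_child[OF fs, of True] Node.prems(3)
    unfolding I0_def I1_def by linarith+
  have finS: "finite (splitvars F x I)" by (simp add: splitvars_def)
  have "card (splitvars F x I) > 0" using finS fs card_gt_0_iff by blast
  then have dF: "d < F" using Node.prems(3) by linarith
  let ?R = "{(a, b). ao_edge N F x a b}"
  have eA: "ao_edge N F x (OrN I d) (AndN I d f)" using Ine Node.prems(2) dF fs by simp
  have e0: "ao_edge N F x (AndN I d f) (OrN I0 (d+1))" using Ine Node.prems(2) dF fs I0_def by simp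
  have e1: "ao_edge N F x (AndN I d f) (OrN I1 (d+1))" using Ine Node.prems(2) dF fs I1_def by simp
  have rA: "(ao_root N, AndN I d f) \<in> ?R\<^sup>*" using Node.prems(4) eA
    by (simp add: rtrancl.rtrancl_into_rtrancl)
  have r0: "(ao_root N, OrN I0 (d+1)) \<in> ?R\<^sup>*" using rA e0 by (simp add: rtrancl.rtrancl_into_rtrancl)
  have r1: "(ao_root N, OrN I1 (d+1)) \<in> ?R\<^sup>*" using rA e1 by (simp add: rtrancl.rtrancl_into_rtrancl)
  have IH0: "{(u, v). u \<in> sgraph x I0 (d+1) t0 \<and> v \<in> sgraph x I0 (d+1) t0 \<and> G_edge N F x u v} = tedges x I0 (d+1) t0"
    using Node.IH(1)[OF v0 sub0(1) c0(1) r0] .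
  have IH1: "{(u, v). u \<in> sgraph x I1 (d+1) t1 \<and> v \<in> sgraph x I1 (d+1) t1 \<and> G_edge N F x u v} = tedges x I1 (d+1) t1"
    using Node.IH(2)[OF v1 sub0(2) c0(2) r1] .
  have S: "sgraph x I d (Node f t0 t1) = {OrN I d, AndN I d f} \<union> sgraph x I0 (d+1) t0 \<union> sgraph x I1 (d+1) t1"
    by (simp add: I0_def I1_def)
  have T: "tedges x I d (Node f t0 t1) = {(OrN I d, AndN I d f), (AndN I d f, OrN I0 (d+1)), (AndN I d f, OrN I1 (d+1))} \<union>
      tedges x I0 (d + 1) t0 \<union> tedges x I1 (d + 1) t1"
    by (simp add: I0_def I1_def)
  show ?case
  proof
    show "tedges x I d (Node f t0 t1) \<subseteq> {(u, v). u \<in> sgraph x I d (Node f t0 t1) \<and> v \<in> sgraph x I d (Node f t0 t1) \<and> G_edge N F x u v}"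
    proof -
      let ?E = "\<lambda>S. {(u, v). u \<in> S \<and> v \<in> S \<and> G_edge N F x u v}"
      have mono: "S1 \<subseteq> S2 \<Longrightarrow> ?E S1 \<subseteq> ?E S2" for S1 S2 by auto
      have B: "tedges x I0 (d + 1) t0 \<subseteq> ?E (sgraph x I d (Node f t0 t1))"
        unfolding IH0[symmetric] by (rule mono) (unfold S, blast)
      have C: "tedges x I1 (d + 1) t1 \<subseteq> ?E (sgraph x I d (Node f t0 t1))"
        unfolding IH1[symmetric] by (rule mono) (unfold S, blast)
      have m: "OrN I d \<in> sgraph x I d (Node f t0 t1)" "AndN I d f \<in> sgraph x I d (Node f t0 t1)"
        "OrN I0 (d+1) \<in> sgraph x I d (Node f t0 t1)" "OrN I1 (d+1) \<in> sgraph x I d (Node f t0 t1)"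
        unfolding S by (auto simp: root_in)
      have g: "G_edge N F x (OrN I d) (AndN I d f)" "G_edge N F x (AndN I d f) (OrN I0 (d+1))"
        "G_edge N F x (AndN I d f) (OrN I1 (d+1))"
        unfolding G_edge_def using eA e0 e1 Node.prems(4) rA by auto
      have A: "{(OrN I d, AndN I d f), (AndN I d f, OrN I0 (d+1)), (AndN I d f, OrN I1 (d+1))}
          \<subseteq> ?E (sgraph x I d (Node f t0 t1))" using m g by blast
      show ?thesis unfolding T using A B C by (simp only: Un_subset_iff)
    qed
  next
    show "{(u, v). u \<in> sgraph x I d (Node f t0 t1) \<and> v \<in> sgraph x I d (Node f t0 t1) \<and> G_edge N F x u v} \<subseteq> tedges x I d (Node f t0 t1)"
    proof clarify
      fix u v
      assume uS: "u \<in> sgraph x I d (Node f t0 t1)" and vS: "v \<in> sgraph x I d (Node f t0 t1)"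
        and G: "G_edge N F x u v"
      have ed: "ao_edge N F x u v" using G by (simp add: G_edge_def)
      note E = edgeE[OF ed]
      have du: "d \<le> ndep u" using S1[OF Node.prems(1) uS] by simp
      show "(u, v) \<in> tedges x I d (Node f t0 t1)"
      proof (cases "ndep u = d")
        case True
        then have "u = OrN I d \<or> u = AndN I d f" using S2[OF Node.prems(1) uS] by simp
        then show ?thesis
        proof
          assume u: "u = OrN I d"
          then have "ndep v = d" using ed by (cases v) auto
          then have "v = OrN I d \<or> v = AndN I d f" using S2[OF Node.prems(1) vS] by simp
          then show ?thesis
          proof
            assume "v = OrN I d" then show ?thesis using u ed by simp
          next
            assume "v = AndN I d f" then show ?thesis using u unfolding T by blast
          qed
        next
          assume u: "u = AndN I d f"
          then obtain J where "v = OrN J (d+1)" "J = I0 \<or> J = I1"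
            using ed I0_def I1_def by (cases v) auto
          then show ?thesis using u unfolding T by blast
        qed
      next
        case False
        then have "u \<noteq> OrN I d \<and> u \<noteq> AndN I d f" by auto
        then have "u \<in> sgraph x I0 (d+1) t0 \<or> u \<in> sgraph x I1 (d+1) t1" using uS unfolding S by blast
        moreover have "v \<in> sgraph x I0 (d+1) t0 \<or> v \<in> sgraph x I1 (d+1) t1"
        proof -
          have "ndep v \<noteq> d" using False du E by linarith
          then have "v \<noteq> OrN I d \<and> v \<noteq> AndN I d f" by auto
          then show ?thesis using vS unfolding S by blast
        qed
        moreover have dj: "I0 \<inter> I1 = {}" using restrict_disj I0_def I1_def by auto
        ultimately consider "u \<in> sgraph x I0 (d+1) t0" "v \<in> sgraph x I0 (d+1) t0"
          | "u \<in> sgraph x I1 (d+1) t1" "v \<in> sgraph x I1 (d+1) t1"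
          | "u \<in> sgraph x I0 (d+1) t0" "v \<in> sgraph x I1 (d+1) t1"
          | "u \<in> sgraph x I1 (d+1) t1" "v \<in> sgraph x I0 (d+1) t0" by blast
        then show ?thesis
        proof cases
          case 1
          then have "(u, v) \<in> tedges x I0 (d + 1) t0" using G unfolding IH0[symmetric] by blast
          then show ?thesis unfolding T by blast
        next
          case 2
          then have "(u, v) \<in> tedges x I1 (d + 1) t1" using G unfolding IH1[symmetric] by blast
          then show ?thesis unfolding T by blast
        next
          case 3
          have "nset u \<subseteq> I0" "nset v \<subseteq> I1" "nset v \<noteq> {}"
            using S1[OF v0 3(1)] S1[OF v1 3(2)] by auto
          then have False using E dj by blast
          then show ?thesis ..
        next
          case 4
          have "nset u \<subseteq> I1" "nset v \<subseteq> I0" "nset v \<noteq> {}"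
            using S1[OF v1 4(1)] S1[OF v0 4(2)] by auto
          then have False using E dj by blast
          then show ?thesis ..
        qed
      qed
    qed
  qed
qed

lemma neglog_mult: "a > 0 \<Longrightarrow> b > 0 \<Longrightarrow> neglog (a * b) = neglog a + neglog b"
  by (simp add: neglog_def ln_mult)

lemma ell_pos: "rho1 > 0 \<Longrightarrow> rho0 > 0 \<Longrightarrow> ell_leaf rho1 rho0 a b > 0"
  unfolding ell_leaf_def Beta_def by (simp add: add_pos_nonneg)

lemma p_leaf_pos:
  assumes "0 < \<alpha>" "\<alpha> < 1" "\<beta> \<ge> 0"
  shows "p_leaf F x \<alpha> \<beta> d I > 0"
proof -
  have g: "1 \<le> (1 + real d) powr \<beta>" using assms by (intro ge_one_powr_ge_zero) auto
  have "(1 + real d) powr (- \<beta>) \<le> 1"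
    unfolding powr_minus using g by (simp add: inverse_le_1_iff)
  then have "\<alpha> * (1 + real d) powr (- \<beta>) < 1"
    using assms by (metis less_le_trans mult_left_le mult.commute order.strict_iff_not powr_ge_zero less_eq_real_def)
  then show ?thesis by (simp add: p_leaf_def p_split_def)
qed

lemma p_inner_pos:
  assumes "0 < \<alpha>" "f \<in> splitvars F x I"
  shows "p_inner F x \<alpha> \<beta> d I > 0"
proof -
  have "finite (splitvars F x I)" unfolding splitvars_def by auto
  then have "card (splitvars F x I) > 0" using assms(2) card_gt_0_iff by blast
  then show ?thesis using assms by (auto simp: p_inner_def p_split_def)
qed

lemma tree_pos:
  assumes "rho1 > 0" "rho0 > 0" "0 < \<alpha>" "\<alpha> < 1" "\<beta> \<ge> 0"
  shows "valid_tree F x I T \<Longrightarrow> tree_lik x y rho1 rho0 I T > 0 \<and> tree_prior F x \<alpha> \<beta> I d T > 0"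
proof (induction T arbitrary: I d)
  case Leaf
  then show ?case using ell_pos p_leaf_pos assms by simp
next
  case (Node f t0 t1)
  then show ?case using p_inner_pos[OF assms(3) valid_split[OF Node.prems]] by simp
qed

lemma cost_eq:
  assumes "rho1 > 0" "rho0 > 0" "0 < \<alpha>" "\<alpha> < 1" "\<beta> \<ge> 0"
  shows "valid_tree F x I T \<Longrightarrow> (\<Sum>(u, v) \<in> tedges x I d T. ao_cost F x y rho1 rho0 \<alpha> \<beta> u v)
     = neglog (tree_lik x y rho1 rho0 I T * tree_prior F x \<alpha> \<beta> I d T)"
proof (induction T arbitrary: I d)
  case Leaf
  then show ?case using ell_pos p_leaf_pos assms
    by (simp add: neglog_mult add.commute)
next
  case (Node f t0 t1)
  define I0 where "I0 = restrict_f x I f False"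
  define I1 where "I1 = restrict_f x I f True"
  let ?c = "\<lambda>(u, v). ao_cost F x y rho1 rho0 \<alpha> \<beta> u v"
  have v0: "valid_tree F x I0 t0" and v1: "valid_tree F x I1 t1"
    using Node.prems(1) by (auto simp: I0_def I1_def)
  define A where "A = {(OrN I d, AndN I d f), (AndN I d f, OrN I0 (d+1)), (AndN I d f, OrN I1 (d+1))}"
  define B where "B = tedges x I0 (d + 1) t0"
  define C where "C = tedges x I1 (d + 1) t1"
  have T: "tedges x I d (Node f t0 t1) = A \<union> B \<union> C"
    by (simp add: A_def B_def C_def I0_def I1_def)
  have fin: "finite A" "finite B" "finite C" by (auto simp: A_def B_def C_def finite_tedges)
  have Bp: "p \<in> B \<Longrightarrow> nset (fst p) \<subseteq> I0 \<and> nset (fst p) \<noteq> {} \<and> d + 1 \<le> ndep (fst p)" for p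
    using tedges_sub[of "fst p" "snd p" x I0 "d+1" t0] S1[OF v0] unfolding B_def by (metis prod.collapse)
  have Cp: "p \<in> C \<Longrightarrow> nset (fst p) \<subseteq> I1 \<and> nset (fst p) \<noteq> {} \<and> d + 1 \<le> ndep (fst p)" for p
    using tedges_sub[of "fst p" "snd p" x I1 "d+1" t1] S1[OF v1] unfolding C_def by (metis prod.collapse)
  have Ap: "p \<in> A \<Longrightarrow> ndep (fst p) = d" for p unfolding A_def by auto
  have dAB: "A \<inter> B = {}" using Ap Bp by fastforce
  have dABC: "(A \<union> B) \<inter> C = {}"
  proof -
    have "A \<inter> C = {}" using Ap Cp by fastforce
    moreover have "B \<inter> C = {}"
    proof (rule ccontr)
      assume "B \<inter> C \<noteq> {}"
      then obtain p where "p \<in> B" "p \<in> C" by blast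
      then show False using Bp Cp restrict_disj[of x I f] I0_def I1_def by blast
    qed
    ultimately show ?thesis by blast
  qed
  have sA: "sum ?c A = neglog (p_inner F x \<alpha> \<beta> d I)"
  proof -
    have "A = insert (OrN I d, AndN I d f) {(AndN I d f, OrN I0 (d+1)), (AndN I d f, OrN I1 (d+1))}"
      by (simp add: A_def)
    moreover have "sum ?c {(AndN I d f, OrN I0 (d+1)), (AndN I d f, OrN I1 (d+1))} = 0"
      by (rule sum.neutral) auto
    ultimately show ?thesis by simp
  qed
  have "sum ?c (tedges x I d (Node f t0 t1)) = sum ?c A + sum ?c B + sum ?c C"
    unfolding T using fin dAB dABC by (simp add: sum.union_disjoint)
  also have "\<dots> = neglog (p_inner F x \<alpha> \<beta> d I)
      + neglog (tree_lik x y rho1 rho0 I0 t0 * tree_prior F x \<alpha> \<beta> I0 (d+1) t0)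
      + neglog (tree_lik x y rho1 rho0 I1 t1 * tree_prior F x \<alpha> \<beta> I1 (d+1) t1)"
    using sA Node.IH(1)[OF v0[unfolded I0_def]] Node.IH(2)[OF v1[unfolded I1_def]]
    by (simp add: B_def C_def I0_def I1_def)
  also have "\<dots> = neglog (tree_lik x y rho1 rho0 I (Node f t0 t1) * tree_prior F x \<alpha> \<beta> I d (Node f t0 t1))"
  proof -
    have p0: "tree_lik x y rho1 rho0 I0 t0 > 0" "tree_prior F x \<alpha> \<beta> I0 (d+1) t0 > 0"
      using tree_pos[OF assms v0] by auto
    have p1: "tree_lik x y rho1 rho0 I1 t1 > 0" "tree_prior F x \<alpha> \<beta> I1 (d+1) t1 > 0"
      using tree_pos[OF assms v1] by auto
    have pi: "p_inner F x \<alpha> \<beta> d I > 0" using p_inner_pos[OF assms(3) valid_split[OF Node.prems]] .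
    have eq: "tree_lik x y rho1 rho0 I (Node f t0 t1) * tree_prior F x \<alpha> \<beta> I d (Node f t0 t1)
       = p_inner F x \<alpha> \<beta> d I * (tree_lik x y rho1 rho0 I0 t0 * tree_prior F x \<alpha> \<beta> I0 (d+1) t0)
         * (tree_lik x y rho1 rho0 I1 t1 * tree_prior F x \<alpha> \<beta> I1 (d+1) t1)"
      by (simp add: I0_def I1_def)
    show ?thesis unfolding eq using p0 p1 pi by (simp add: neglog_mult)
  qed
  finally show ?case .
qed


theorem theorem6:
  fixes N F :: nat and x :: "nat \<Rightarrow> nat \<Rightarrow> bool" and y :: "nat \<Rightarrow> bool"
    and rho1 rho0 \<alpha> \<beta> :: real
  assumes "rho1 > 0" and "rho0 > 0" and "0 < \<alpha>" and "\<alpha> < 1" and "\<beta> \<ge> 0"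
  shows "(\<forall>T. valid_tree F x {1..N} T \<longrightarrow>
            sg_cost N F x y rho1 rho0 \<alpha> \<beta> (sgraph x {1..N} 0 T)
              = neglog (joint_prob N F x y rho1 rho0 \<alpha> \<beta> T))
       \<and> (\<forall>T0. valid_tree F x {1..N} T0 \<longrightarrow>
            ((\<forall>T. valid_tree F x {1..N} T \<longrightarrow>
                sg_cost N F x y rho1 rho0 \<alpha> \<beta> (sgraph x {1..N} 0 T0)
                  \<le> sg_cost N F x y rho1 rho0 \<alpha> \<beta> (sgraph x {1..N} 0 T))
             \<longleftrightarrow>
             (\<forall>T. valid_tree F x {1..N} T \<longrightarrow>
                joint_prob N F x y rho1 rho0 \<alpha> \<beta> T \<le> joint_prob N F x y rho1 rho0 \<alpha> \<beta> T0)))"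
proof -
  have cardF: "card (splitvars F x {1..N}) + 0 \<le> F"
  proof -
    have "splitvars F x {1..N} \<subseteq> {1..F}" unfolding splitvars_def by auto
    then have "card (splitvars F x {1..N}) \<le> card {1..F}" by (intro card_mono) auto
    then show ?thesis by simp
  qed
  have root: "(ao_root N, OrN {1..N} 0) \<in> {(a, b). ao_edge N F x a b}\<^sup>*"
    by (simp add: ao_root_def)
  have main: "sg_cost N F x y rho1 rho0 \<alpha> \<beta> (sgraph x {1..N} 0 T)
              = neglog (joint_prob N F x y rho1 rho0 \<alpha> \<beta> T)" if v: "valid_tree F x {1..N} T" for T
    unfolding sg_cost_def edges_eq[OF v order_refl cardF root] joint_prob_def
    using cost_eq[OF assms v] .
  have pos: "joint_prob N F x y rho1 rho0 \<alpha> \<beta> T > 0" if v: "valid_tree F x {1..N} T" for T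
    using tree_pos[OF assms v, of y 0] unfolding joint_prob_def by simp
  have main2: "sg_cost N F x y rho1 rho0 \<alpha> \<beta> (sgraph x {1..N} 0 T)
              = ereal (- ln (joint_prob N F x y rho1 rho0 \<alpha> \<beta> T))" if v: "valid_tree F x {1..N} T" for T
    using main[OF v] pos[OF v] by (simp add: neglog_def)
  show ?thesis
  proof (intro conjI allI impI)
    fix T assume "valid_tree F x {1..N} T"
    then show "sg_cost N F x y rho1 rho0 \<alpha> \<beta> (sgraph x {1..N} 0 T)
              = neglog (joint_prob N F x y rho1 rho0 \<alpha> \<beta> T)" by (rule main)
  next
    fix T0 assume v0: "valid_tree F x {1..N} T0"
    have iff: "sg_cost N F x y rho1 rho0 \<alpha> \<beta> (sgraph x {1..N} 0 T0)
                  \<le> sg_cost N F x y rho1 rho0 \<alpha> \<beta> (sgraph x {1..N} 0 T)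
           \<longleftrightarrow> joint_prob N F x y rho1 rho0 \<alpha> \<beta> T \<le> joint_prob N F x y rho1 rho0 \<alpha> \<beta> T0"
      if v: "valid_tree F x {1..N} T" for T
      using main2[OF v] main2[OF v0] pos[OF v] pos[OF v0] by simp
    show "(\<forall>T. valid_tree F x {1..N} T \<longrightarrow>
                sg_cost N F x y rho1 rho0 \<alpha> \<beta> (sgraph x {1..N} 0 T0)
                  \<le> sg_cost N F x y rho1 rho0 \<alpha> \<beta> (sgraph x {1..N} 0 T))
             \<longleftrightarrow>
             (\<forall>T. valid_tree F x {1..N} T \<longrightarrow>
                joint_prob N F x y rho1 rho0 \<alpha> \<beta> T \<le> joint_prob N F x y rho1 rho0 \<alpha> \<beta> T0)"
      using iff by blast
  qed
qed

end
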